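(* If $n$ is a power of $2$ (with exponent at least $1$), then $$\sum_{k=0}^{n-1}(-1)^k(2k+1)^3D_k\equiv 2n^2\pmod{n^3}.$$
   Context: $D_n=\sum_{k=0}^{n}\binom{n}{k}\binom{n+k}{k}$ are the central Delannoy numbers. *)

theory Defs
  imports Main "HOL-Number_Theory.Cong"
begin

definition delannoy :: "nat \<Rightarrow> int" where
  "delannoy n = (\<Sum>k=0..n. int (n choose k) * int ((n + k) choose k))"

end

theory Submission
  imports Defs Complex_Main
begin

definition F :: "nat \<Rightarrow> nat \<Rightarrow> real" where
  "F n k = real (n choose k) * real ((n + k) choose k)"

lemma F_poch: "F n k * (fact k)^2 = pochhammer (real n - real k + 1) (2*k)"
proof -
  have a: "real (n choose k) = pochhammer (real n - real k + 1) k / fact k"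
    using binomial_gbinomial[of n k, where 'a=real] gbinomial_pochhammer'[of "real n" k] by simp
  have b: "real ((n+k) choose k) = pochhammer (real n + 1) k / fact k"
    using binomial_gbinomial[of "n+k" k, where 'a=real] gbinomial_pochhammer'[of "real (n+k)" k] by simp
  have c: "pochhammer (real n - real k + 1) (k + k) = pochhammer (real n - real k + 1) k * pochhammer (real n + 1) k"
    using pochhammer_product'[of "real n - real k + 1" k k] by simp
  show ?thesis unfolding F_def a b using c by (simp add: power2_eq_square mult_2)
qed

lemma F_rec:
  "real (n+2) * F (n+2) (Suc k') - real (2*n+3) * F (n+1) (Suc k') + real (n+1) * F n (Suc k')
     = 2 * real (2*n+3) * F (n+1) k'"
proof -
  define k where "k = Suc k'"
  define z :: real where "z = real n - real k' + 2"
  define Z where "Z = pochhammer z (2*k')"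
  have e1: "F (n+2) k * (fact k)^2 = Z * (real n + real k + 1) * (real n + real k + 2)"
  proof -
    have "F (n+2) k * (fact k)^2 = pochhammer z (2*k' + 2)"
      using F_poch[of "n+2" k] unfolding k_def z_def by (simp add: algebra_simps)
    also have "\<dots> = Z * (z + 2*k') * (z + 2*k' + 1)"
      unfolding Z_def by (simp add: pochhammer_rec' numeral_2_eq_2 algebra_simps)
    finally show ?thesis unfolding z_def k_def by (simp add: algebra_simps)
  qed
  have e2: "F (n+1) k * (fact k)^2 = (z - 1) * Z * (real n + real k + 1)"
  proof -
    have "F (n+1) k * (fact k)^2 = pochhammer (z - 1) (Suc (2*k' + 1))"
      using F_poch[of "n+1" k] unfolding k_def z_def by (simp add: algebra_simps)
    also have "\<dots> = (z - 1) * pochhammer z (Suc (2*k'))"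
      by (subst pochhammer_rec) simp
    also have "\<dots> = (z - 1) * (Z * (z + 2*k'))"
      unfolding Z_def by (subst pochhammer_rec') (simp add: algebra_simps)
    finally show ?thesis unfolding z_def k_def by (simp add: algebra_simps)
  qed
  have e3: "F n k * (fact k)^2 = (z - 2) * (z - 1) * Z"
  proof -
    have "F n k * (fact k)^2 = pochhammer (z - 2) (Suc (Suc (2*k')))"
      using F_poch[of n k] unfolding k_def z_def by (simp add: algebra_simps)
    also have "\<dots> = (z - 2) * ((z - 1) * Z)"
      unfolding Z_def by (simp add: pochhammer_rec algebra_simps)
    finally show ?thesis by (simp add: algebra_simps)
  qed
  have e4: "F (n+1) k' * (fact k')^2 = Z"
    using F_poch[of "n+1" k'] unfolding z_def Z_def by (simp add: algebra_simps)
  have fk: "(fact k :: real)^2 = real k ^2 * (fact k')^2"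
    unfolding k_def by (simp add: power_mult_distrib)
  have "(real (n+2) * F (n+2) k - real (2*n+3) * F (n+1) k + real (n+1) * F n k) * (fact k)^2
      = (2 * real (2*n+3) * F (n+1) k') * (fact k)^2"
  proof -
    have "(real (n+2) * F (n+2) k - real (2*n+3) * F (n+1) k + real (n+1) * F n k) * (fact k)^2
       = real (n+2) * (F (n+2) k * (fact k)^2) - real (2*n+3) * (F (n+1) k * (fact k)^2)
         + real (n+1) * (F n k * (fact k)^2)" by (simp add: algebra_simps)
    also have "\<dots> = real (n+2) * (Z * (real n + real k + 1) * (real n + real k + 2))
        - real (2*n+3) * ((z - 1) * Z * (real n + real k + 1)) + real (n+1) * ((z - 2) * (z - 1) * Z)"
      unfolding e1 e2 e3 ..
    also have "\<dots> = 2 * real (2*n+3) * real k^2 * Z"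
      unfolding z_def k_def by (simp add: algebra_simps power2_eq_square)
    also have "\<dots> = (2 * real (2*n+3) * F (n+1) k') * (fact k)^2"
      unfolding fk e4[symmetric] by (simp add: algebra_simps)
    finally show ?thesis .
  qed
  then show ?thesis unfolding k_def by simp
qed

lemma F_zero: "n < k \<Longrightarrow> F n k = 0"
  unfolding F_def by simp

lemma del_real: "real_of_int (delannoy n) = (\<Sum>k\<le>n+p. F n k)"
proof -
  have "real_of_int (delannoy n) = (\<Sum>k\<le>n. F n k)"
    unfolding delannoy_def F_def atLeast0AtMost by simp
  also have "\<dots> = (\<Sum>k\<le>n+p. F n k)"
    by (rule sum.mono_neutral_left) (auto simp: F_zero)
  finally show ?thesis .
qed

lemma del_rec_real:
  "real (n+2) * real_of_int (delannoy (n+2)) - real (2*n+3) * real_of_int (delannoy (n+1))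
     + real (n+1) * real_of_int (delannoy n) = 2 * real (2*n+3) * real_of_int (delannoy (n+1))"
proof -
  define L where "L k = real (n+2) * F (n+2) k - real (2*n+3) * F (n+1) k + real (n+1) * F n k" for k
  have "real (n+2) * real_of_int (delannoy (n+2)) - real (2*n+3) * real_of_int (delannoy (n+1))
     + real (n+1) * real_of_int (delannoy n) = (\<Sum>k\<le>Suc (n+1). L k)"
    unfolding L_def del_real[of "n+2" 0] del_real[of "n+1" 1] del_real[of n 2]
    by (simp add: sum.distrib sum_subtractf sum_distrib_left del: sum.atMost_Suc)
  also have "\<dots> = L 0 + (\<Sum>k\<le>n+1. L (Suc k))" by (rule sum.atMost_Suc_shift)
  also have "L 0 = 0" unfolding L_def F_def by simp
  also have "(\<Sum>k\<le>n+1. L (Suc k)) = (\<Sum>k\<le>n+1. 2 * real (2*n+3) * F (n+1) k)"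
    unfolding L_def using F_rec by simp
  also have "\<dots> = 2 * real (2*n+3) * real_of_int (delannoy (n+1))"
    unfolding del_real[of "n+1" 0] by (simp add: sum_distrib_left del: sum.atMost_Suc)
  finally show ?thesis by simp
qed

lemma del_rec: "int (n+2) * delannoy (n+2) = 3 * (2 * int n + 3) * delannoy (n+1) - int (n+1) * delannoy n"
proof -
  have "real_of_int (int (n+2) * delannoy (n+2)) = real_of_int (3 * (2 * int n + 3) * delannoy (n+1) - int (n+1) * delannoy n)"
    using del_rec_real[of n] by (simp add: algebra_simps)
  then show ?thesis by (simp only: of_int_eq_iff)
qed

definition Sf :: "nat \<Rightarrow> int" where
  "Sf N = (\<Sum>k<N. (-1) ^ k * (2 * int k + 1) ^ 3 * delannoy k)"

lemma Sf_closed: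
  "4 * Sf (n+1) = (-1)^n * int (n+1) * ((4 * int (n+1)^2 - 1) * (delannoy (n+1) + delannoy n)
      - 4 * int (n+1) * (delannoy (n+1) - delannoy n))"
proof (induction n)
  case 0
  then show ?case by (simp add: Sf_def delannoy_def)
next
  case (Suc n)
  define s :: int where "s = (-1)^n"
  define a where "a = delannoy n"
  define b where "b = delannoy (n+1)"
  define c where "c = delannoy (n+2)"
  define x where "x = int n"
  have rec: "(x+2) * c = 3 * (2 * x + 3) * b - (x+1) * a"
    using del_rec[of n] unfolding a_def b_def c_def x_def by (simp add: algebra_simps)
  have IH: "4 * Sf (n+1) = s * (x+1) * ((4 * (x+1)^2 - 1) * (b + a) - 4 * (x+1) * (b - a))"
    using Suc.IH by (simp only: s_def a_def b_def x_def of_nat_add of_nat_1)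
  have step: "Sf (n+2) = Sf (n+1) + (-s) * (2 * x + 3)^3 * b"
    unfolding Sf_def s_def b_def x_def by (simp add: algebra_simps)
  have "4 * Sf (n+2) = (-s) * ((4*(x+2)^2 - 1 - 4*(x+2)) * ((x+2) * c) + (x+2) * (4*(x+2)^2 - 1 + 4*(x+2)) * b)"
    if "4 * Sf (n+2) = (-s) * (x+2) * ((4 * (x+2)^2 - 1) * (c + b) - 4 * (x+2) * (c - b))"
    using that by (simp add: algebra_simps)
  have goal: "4 * Sf (n+2) = (-s) * (x+2) * ((4 * (x+2)^2 - 1) * (c + b) - 4 * (x+2) * (c - b))"
  proof -
    have "(-s) * (x+2) * ((4 * (x+2)^2 - 1) * (c + b) - 4 * (x+2) * (c - b))
       = (-s) * ((4*(x+2)^2 - 1 - 4*(x+2)) * ((x+2) * c) + (x+2) * (4*(x+2)^2 - 1 + 4*(x+2)) * b)"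
      by (simp add: algebra_simps)
    also have "\<dots> = (-s) * ((4*(x+2)^2 - 1 - 4*(x+2)) * (3 * (2 * x + 3) * b - (x+1) * a) + (x+2) * (4*(x+2)^2 - 1 + 4*(x+2)) * b)"
      unfolding rec ..
    also have "\<dots> = s * (x+1) * ((4 * (x+1)^2 - 1) * (b + a) - 4 * (x+1) * (b - a)) + 4 * ((-s) * (2 * x + 3)^3 * b)"
      by (simp add: algebra_simps power2_eq_square power3_eq_cube)
    also have "\<dots> = 4 * Sf (n+1) + 4 * ((-s) * (2 * x + 3)^3 * b)"
      unfolding IH ..
    also have "\<dots> = 4 * (Sf (n+1) + (-s) * (2 * x + 3)^3 * b)"
      by (simp only: distrib_left)
    finally show ?thesis unfolding step by simp
  qed
  show ?case using goal unfolding s_def c_def b_def x_def by (simp add: algebra_simps)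
qed

lemma choose_sum_aux: "i \<le> n \<Longrightarrow> (\<Sum>k\<le>n. (n choose k) * (k choose i)) = (n choose i) * 2 ^ (n - i)"
proof -
  assume i: "i \<le> n"
  have "(\<Sum>k\<le>n. (n choose k) * (k choose i)) = (\<Sum>k\<in>{i..n}. (n choose k) * (k choose i))"
    by (rule sum.mono_neutral_right) auto
  also have "\<dots> = (\<Sum>l\<in>{0..n-i}. (n choose (l+i)) * ((l+i) choose i))"
    using sum.shift_bounds_cl_nat_ivl[of "\<lambda>k. (n choose k) * (k choose i)" 0 i "n-i"] i by simp
  also have "\<dots> = (\<Sum>l\<in>{0..n-i}. (n choose i) * ((n-i) choose l))"
  proof (rule sum.cong[OF refl])
    fix l assume l: "l \<in> {0..n-i}"
    show "(n choose (l+i)) * ((l+i) choose i) = (n choose i) * ((n-i) choose l)"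
      using choose_mult[of i "l+i" n] l i by simp
  qed
  also have "\<dots> = (n choose i) * 2 ^ (n - i)"
    by (simp add: sum_distrib_left[symmetric] atLeast0AtMost choose_row_sum)
  finally show ?thesis .
qed

lemma delannoy_sq: "delannoy n = int (\<Sum>k\<le>n. (n choose k)^2 * 2 ^ k)"
proof -
  have v: "((n+k) choose k) = (\<Sum>i\<le>n. (n choose i) * (k choose i))" if "k \<le> n" for k
  proof -
    have "((n+k) choose k) = (\<Sum>i\<le>k. (n choose i) * (k choose (k - i)))"
      using vandermonde[of n k k] by simp
    also have "\<dots> = (\<Sum>i\<le>k. (n choose i) * (k choose i))"
      by (rule sum.cong[OF refl]) (simp add: binomial_symmetric[symmetric])
    also have "\<dots> = (\<Sum>i\<le>n. (n choose i) * (k choose i))"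
      by (rule sum.mono_neutral_left) (use that in auto)
    finally show ?thesis .
  qed
  have "(\<Sum>k\<le>n. (n choose k) * ((n+k) choose k)) = (\<Sum>k\<le>n. \<Sum>i\<le>n. (n choose i) * ((n choose k) * (k choose i)))"
  proof (rule sum.cong[OF refl])
    fix k assume "k \<in> {..n}"
    then have "((n+k) choose k) = (\<Sum>i\<le>n. (n choose i) * (k choose i))" using v by simp
    then show "(n choose k) * ((n+k) choose k) = (\<Sum>i\<le>n. (n choose i) * ((n choose k) * (k choose i)))"
      by (simp add: sum_distrib_left algebra_simps)
  qed
  also have "\<dots> = (\<Sum>i\<le>n. \<Sum>k\<le>n. (n choose i) * ((n choose k) * (k choose i)))"
    by (rule sum.swap)
  also have "\<dots> = (\<Sum>i\<le>n. (n choose i)^2 * 2 ^ (n - i))"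
    by (rule sum.cong[OF refl]) (simp add: sum_distrib_left[symmetric] choose_sum_aux power2_eq_square)
  also have "\<dots> = (\<Sum>i\<le>n. (n choose (n - i))^2 * 2 ^ (n - i))"
    by (rule sum.cong[OF refl]) (simp add: binomial_symmetric[symmetric])
  also have "\<dots> = (\<Sum>i\<le>n. (n choose i)^2 * 2 ^ i)"
    unfolding atLeast0AtMost[symmetric]
    by (subst sum.atLeastAtMost_rev) simp
  finally show ?thesis unfolding delannoy_def atLeast0AtMost
    by (metis (no_types, lifting) of_nat_mult of_nat_sum sum.cong)
qed

lemma two_pow_factor: "\<not> 2^(j+1) dvd k \<Longrightarrow> (2::int)^m dvd int k * c \<Longrightarrow> 2^(m-j) dvd c"
proof (induction j arbitrary: m k)
  case 0
  then have "odd k" by simp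
  then have "coprime ((2::int)^m) (int k)" by (simp add: coprime_commute)
  then show ?case using 0(2) by (simp add: coprime_dvd_mult_right_iff)
next
  case (Suc j)
  show ?case
  proof (cases "odd k")
    case True
    then have "coprime ((2::int)^m) (int k)" by (simp add: coprime_commute)
    then have "2^m dvd c" using Suc(3) by (simp add: coprime_dvd_mult_right_iff)
    then show ?thesis by (meson diff_le_self dvd_trans le_imp_power_dvd)
  next
    case False
    then obtain k' where k: "k = 2 * k'" by (auto elim: evenE)
    show ?thesis
    proof (cases m)
      case 0 then show ?thesis by simp
    next
      case (Suc m')
      have "\<not> 2^(j+1) dvd k'" using Suc.prems(1) k by (simp add: mult_dvd_mono)
      moreover have "(2::int)^m' dvd int k' * c" using Suc.prems(2) k Suc by simp
      ultimately have "2^(m'-j) dvd c" using Suc.IH by blast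
      then show ?thesis using Suc by simp
    qed
  qed
qed

lemma exists_log: "1 \<le> (k::nat) \<Longrightarrow> \<exists>j. 2^j \<le> k \<and> k < 2^(j+1)"
proof (induction k rule: less_induct)
  case (less k)
  show ?case
  proof (cases "k = 1")
    case True then show ?thesis by (rule_tac x=0 in exI) simp
  next
    case False
    then have "1 \<le> k div 2" "k div 2 < k" using less.prems by auto
    then obtain j where "2^j \<le> k div 2" "k div 2 < 2^(j+1)" using less.IH by blast
    then show ?thesis by (rule_tac x="j+1" in exI) auto
  qed
qed

lemma two_j_le: "2 * j \<le> (2::nat)^j"
proof (induction j)
  case 0 then show ?case by simp
next
  case (Suc j)
  then show ?case
  proof (cases j)
    case 0 then show ?thesis by simp
  next
    case (Suc i)
    have "1 \<le> (2::nat)^i" by simp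
    then have "2 \<le> (2::nat)^j" using Suc by simp
    then show ?thesis using Suc.IH by simp
  qed
qed

definition cc :: "nat \<Rightarrow> nat \<Rightarrow> int" where "cc N k = int (N choose k)"
definition xx :: "nat \<Rightarrow> nat \<Rightarrow> int" where "xx N k = cc N k - (-1)^k"

lemma xx_0: "xx N 0 = 0" by (simp add: xx_def cc_def)

lemma xx_Suc: "xx N (Suc i) = int (Suc N choose Suc i) - xx N i"
  by (simp add: xx_def cc_def binomial_Suc_Suc)

lemma binom_dvd:
  assumes "Suc N = 2^m" "0 < k" "k < 2^(j+1)"
  shows "(2::int)^(m-j) dvd int (Suc N choose k)"
proof -
  obtain i where k: "k = Suc i" using assms(2) gr0_implies_Suc by blast
  have nd: "\<not> 2^(j+1) dvd k" using assms(2,3) by (auto dest: dvd_imp_le)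
  have "int k * int (Suc N choose k) = int (Suc N * (N choose i))"
    using binomial_absorption[of i "Suc N"] k by (metis diff_Suc_1 of_nat_mult)
  also have "\<dots> = 2^m * int (N choose i)" using assms(1) by simp
  finally have "(2::int)^m dvd int k * int (Suc N choose k)" by simp
  then show ?thesis using two_pow_factor[OF nd] by blast
qed

lemma xx_dvd:
  assumes "Suc N = 2^m"
  shows "i < 2^(j+1) \<Longrightarrow> (2::int)^(m-j) dvd xx N i"
proof (induction i)
  case 0 then show ?case by (simp add: xx_0)
next
  case (Suc i)
  then have "(2::int)^(m-j) dvd xx N i" by simp
  moreover have "(2::int)^(m-j) dvd int (Suc N choose Suc i)"
    using binom_dvd[OF assms, of "Suc i" j] Suc.prems by simp
  ultimately show ?case unfolding xx_Suc by (simp add: dvd_diff)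
qed

lemma term1:
  assumes "Suc N = 2^m" "k \<le> N"
  shows "(2::int)^(2*m) dvd 2^k * (xx N k)^2"
proof (cases "k = 0")
  case True then show ?thesis by (simp add: xx_0)
next
  case False
  then obtain j where j: "2^j \<le> k" "k < 2^(j+1)" using exists_log[of k] by auto
  have "(2::nat)^j < 2^m" using j(1) assms by linarith
  then have jm: "j < m" by simp
  have "(2::int)^(m-j) dvd xx N k" using xx_dvd[OF assms(1) j(2)] .
  then have "((2::int)^(m-j))^2 dvd (xx N k)^2" by (rule dvd_power_same)
  then have "(2::int)^k * ((2::int)^(m-j))^2 dvd 2^k * (xx N k)^2" by (rule mult_dvd_mono[OF dvd_refl])
  moreover have "(2::int)^k * ((2::int)^(m-j))^2 = 2^(k + 2*(m-j))"
    by (simp add: power_add power_mult[symmetric] mult.commute)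
  moreover have "2*m \<le> k + 2*(m-j)" using two_j_le[of j] j(1) jm by linarith
  ultimately show ?thesis by (metis dvd_trans le_imp_power_dvd)
qed

lemma term2:
  assumes "Suc N = 2^m" "k \<le> N"
  shows "(2::int)^(2*m) dvd 2^k * xx N k * xx N (Suc k)"
proof (cases "k = 0")
  case True then show ?thesis by (simp add: xx_0)
next
  case False
  then obtain j where j: "2^j \<le> k" "k < 2^(j+1)" using exists_log[of k] by auto
  have "(2::nat)^j < 2^m" using j(1) assms by linarith
  then have jm: "j < m" by simp
  have d1: "(2::int)^(m-j) dvd xx N k" using xx_dvd[OF assms(1) j(2)] .
  show ?thesis
  proof (cases "Suc k < 2^(j+1)")
    case True
    have d2: "(2::int)^(m-j) dvd xx N (Suc k)" using xx_dvd[OF assms(1) True] .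
    have "(2::int)^k * 2^(m-j) * 2^(m-j) dvd 2^k * xx N k * xx N (Suc k)"
      by (intro mult_dvd_mono d1 d2 dvd_refl)
    moreover have "(2::int)^k * 2^(m-j) * 2^(m-j) = 2^(k + (m-j) + (m-j))"
      by (simp add: power_add)
    moreover have "2*m \<le> k + (m-j) + (m-j)" using two_j_le[of j] j(1) jm by linarith
    ultimately show ?thesis by (metis dvd_trans le_imp_power_dvd)
  next
    case False
    then have k1: "Suc k = 2^(j+1)" using j(2) by simp
    have "(2::nat)^(j+1) \<le> 2^m" using k1 assms by linarith
    then have jm1: "j + 1 \<le> m" using power_le_imp_le_exp[of 2 "j+1" m] by simp
    have "Suc k < 2^(j+1+1)" using k1 by simp
    then have d2: "(2::int)^(m-(j+1)) dvd xx N (Suc k)" using xx_dvd[OF assms(1)] by blast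
    have "(2::int)^k * 2^(m-j) * 2^(m-(j+1)) dvd 2^k * xx N k * xx N (Suc k)"
      by (intro mult_dvd_mono d1 d2 dvd_refl)
    moreover have "(2::int)^k * 2^(m-j) * 2^(m-(j+1)) = 2^(k + (m-j) + (m-(j+1)))"
      by (simp add: power_add)
    moreover have "2*m \<le> k + (m-j) + (m-(j+1))"
      using two_j_le[of "j+1"] k1 jm1 by simp
    ultimately show ?thesis by (metis dvd_trans le_imp_power_dvd)
  qed
qed

lemma sum_bin: "(\<Sum>k\<le>N. (-2)^k * cc N k) = (-1)^N"
proof -
  have "((-2::int) + 1)^N = (\<Sum>k\<le>N. of_nat (N choose k) * (-2)^k * 1^(N-k))"
    by (rule binomial_ring)
  then show ?thesis by (simp add: cc_def mult.commute)
qed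

lemma sum_geom: "(\<Sum>k\<le>N. (2::int)^k) = 2^(Suc N) - 1"
  by (induction N) auto

lemma sum_shift: "-2 * (\<Sum>k\<le>N. (-2)^k * cc N (Suc k)) = (-1)^N - 1"
proof -
  have "-2 * (\<Sum>k\<le>N. (-2)^k * cc N (Suc k)) = (\<Sum>k\<le>N. (-2)^(Suc k) * cc N (Suc k))"
    by (simp add: sum_distrib_left mult.assoc)
  also have "\<dots> = (\<Sum>k\<le>Suc N. (-2)^k * cc N k) - (-2)^0 * cc N 0"
    by (subst sum.atMost_Suc_shift) simp
  also have "(\<Sum>k\<le>Suc N. (-2)^k * cc N k) = (\<Sum>k\<le>N. (-2)^k * cc N k)"
    by (simp add: cc_def)
  finally show ?thesis using sum_bin[of N] by (simp add: cc_def)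
qed

lemma e_sq: "((-1::int)^k)^2 = 1"
  by (simp add: power_mult[symmetric])

lemma DN_form:
  "(\<Sum>k\<le>N. (cc N k)^2 * 2^k) = (\<Sum>k\<le>N. 2^k * (xx N k)^2) + 2 * (-1)^N - (2^(Suc N) - 1)"
proof -
  have pt: "(cc N k)^2 * 2^k = 2^k * (xx N k)^2 + 2 * ((-2)^k * cc N k) - 2^k" for k
  proof -
    have m2: "(-2::int)^k = (-1)^k * 2^k" by (metis mult_minus1 power_mult_distrib)
    show ?thesis unfolding xx_def m2 using e_sq[of k]
      by (simp add: algebra_simps power2_eq_square)
  qed
  show ?thesis
    by (simp add: pt sum.distrib sum_subtractf sum_distrib_left[symmetric] sum_bin sum_geom)
qed

lemma M_form:
  "(\<Sum>k\<le>N. 2^k * cc N k * cc N (Suc k)) = (\<Sum>k\<le>N. 2^k * xx N k * xx N (Suc k))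
      - (-1)^N + (\<Sum>k\<le>N. (-2)^k * cc N (Suc k)) + (2^(Suc N) - 1)"
proof -
  have pt: "2^k * cc N k * cc N (Suc k) = 2^k * xx N k * xx N (Suc k) - (-2)^k * cc N k + (-2)^k * cc N (Suc k) + 2^k" for k
  proof -
    have m2: "(-2::int)^k = (-1)^k * 2^k" by (metis mult_minus1 power_mult_distrib)
    show ?thesis unfolding xx_def m2 using e_sq[of k]
      by (simp add: algebra_simps power2_eq_square)
  qed
  show ?thesis
    by (simp add: pt sum.distrib sum_subtractf sum_bin sum_geom)
qed

lemma Dn_form:
  "(\<Sum>k\<le>Suc N. (int (Suc N choose k))^2 * 2^k)
     = 3 * (\<Sum>k\<le>N. (cc N k)^2 * 2^k) + 4 * (\<Sum>k\<le>N. 2^k * cc N k * cc N (Suc k))"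
proof -
  have "(\<Sum>k\<le>Suc N. (int (Suc N choose k))^2 * 2^k)
      = 1 + (\<Sum>k\<le>N. (cc N k + cc N (Suc k))^2 * 2^(Suc k))"
    by (subst sum.atMost_Suc_shift) (simp add: cc_def binomial_Suc_Suc)
  also have "\<dots> = 1 + 2 * (\<Sum>k\<le>N. (cc N k)^2 * 2^k) + 4 * (\<Sum>k\<le>N. 2^k * cc N k * cc N (Suc k))
        + (\<Sum>k\<le>N. (cc N (Suc k))^2 * 2^(Suc k))"
    by (simp add: sum.distrib sum_distrib_left power2_eq_square algebra_simps)
  also have "(\<Sum>k\<le>N. (cc N (Suc k))^2 * 2^(Suc k)) = (\<Sum>k\<le>Suc N. (cc N k)^2 * 2^k) - 1"
    by (subst sum.atMost_Suc_shift) (simp add: cc_def)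
  also have "(\<Sum>k\<le>Suc N. (cc N k)^2 * 2^k) = (\<Sum>k\<le>N. (cc N k)^2 * 2^k)"
    by (simp add: cc_def)
  finally show ?thesis by simp
qed


theorem mainTheorem4:
  fixes n m :: nat
  assumes "m \<ge> 1" and "n = 2 ^ m"
  shows "[(\<Sum>k=0..n-1. (-1) ^ k * (2 * int k + 1) ^ 3 * delannoy k) = 2 * int n ^ 2] (mod (int n ^ 3))"
proof -
  obtain N where nN: "n = Suc N" using assms(2) by (metis gr0_implies_Suc zero_less_power zero_less_numeral)
  have SN: "Suc N = 2^m" using nN assms(2) by simp
  have "even n" using assms by simp
  then have oddN: "odd N" using nN by simp
  then have eN: "(-1::int)^N = -1" by simp
  define nn where "nn = int n"
  have nn2: "nn^2 = 2^(2*m)" unfolding nn_def assms(2) by (simp add: power_mult[symmetric] mult.commute)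
  define Q1 where "Q1 = (\<Sum>k\<le>N. 2^k * (xx N k)^2)"
  define Q2 where "Q2 = (\<Sum>k\<le>N. 2^k * xx N k * xx N (Suc k))"
  have dQ1: "nn^2 dvd Q1" unfolding nn2 Q1_def by (rule dvd_sum) (use term1[OF SN] in auto)
  have dQ2: "nn^2 dvd Q2" unfolding nn2 Q2_def by (rule dvd_sum) (use term2[OF SN] in auto)
  have dP: "nn^2 dvd 2^n"
    unfolding nn2 using two_j_le[of m] assms(2) by (simp add: le_imp_power_dvd)
  define DN where "DN = (\<Sum>k\<le>N. (cc N k)^2 * 2^k)"
  define MM where "MM = (\<Sum>k\<le>N. 2^k * cc N k * cc N (Suc k))"
  have DN_del: "delannoy N = DN" unfolding DN_def delannoy_sq cc_def by simp
  have Dn_del: "delannoy n = 3 * DN + 4 * MM"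
    unfolding DN_def MM_def Dn_form[symmetric] delannoy_sq nN by simp
  have T1: "(\<Sum>k\<le>N. (-2)^k * cc N (Suc k)) = 1" using sum_shift[of N] eN by simp
  have DN_eq: "DN = (Q1 - 2^n) - 1"
    unfolding DN_def DN_form Q1_def eN nN by simp
  have MM_eq: "MM = (Q2 + 2^n) + 1"
    unfolding MM_def M_form Q2_def eN T1 nN by simp
  obtain a where a: "Q1 - 2^n = nn^2 * a" using dQ1 dP by (meson dvd_diff dvdE)
  obtain b where b: "Q2 + 2^n = nn^2 * b" using dQ2 dP by (meson dvd_add dvdE)
  define S where "S = (\<Sum>k=0..n-1. (-1) ^ k * (2 * int k + 1) ^ 3 * delannoy k)"
  have S_Sf: "S = Sf n" unfolding S_def Sf_def nN atLeast0AtMost lessThan_Suc_atMost by simp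
  have cl: "4 * S = (-1)^N * nn * ((4 * nn^2 - 1) * (delannoy n + delannoy N)
      - 4 * nn * (delannoy n - delannoy N))"
    using Sf_closed[of N] unfolding S_Sf nn_def nN by simp
  have "4 * S = 4 * (2 * nn^2 + nn^3 * (- (4 * nn^2 - 1) * (a + b) + nn * (2 * a + 4 * b)))"
    unfolding cl eN Dn_del DN_del MM_eq DN_eq a b by (simp add: algebra_simps power2_eq_square power3_eq_cube)
  then have "S = 2 * nn^2 + nn^3 * (- (4 * nn^2 - 1) * (a + b) + nn * (2 * a + 4 * b))" by simp
  then show ?thesis unfolding S_def[symmetric] nn_def[symmetric] cong_iff_dvd_diff by simp
qed

end
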